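(* Let $p:X\to Y$ be a covering map with finite fibers and with $X$ Hausdorff. Then every open cover $\mathcal V$ of $X$ has a refinement that is a covering structure of $p$.
   Context: A covering map $p:X\to Y$ is a continuous surjection such that every point of $Y$ has an open neighborhood $V$ with $p^{-1}(V)$ a disjoint union of open sets each mapped homeomorphically onto $V$. A slice of $p$ is an open set $U\subseteq X$ such that $p^{-1}(p(U))$ is the disjoint union of a family of open sets $U_s$ ($s\in S$), each mapped by $p$ homeomorphically onto $p(U)$, with $U=U_t$ for some $t\in S$. A covering structure of $p$ is an open cover $\mathcal S$ of $X$ by slices of $p$ such that for every $U\in\mathcal S$, $p^{-1}(p(U))$ is the disjoint union of a family $\{U_j\}_{j\in J}$ of elements of $\mathcal S$, each mapped homeomorphically onto $p(U)$. A refinement of $\mathcal V$ is an open cover each of whose elements is contained in some element of $\mathcal V$. *)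

theory Defs
  imports "HOL-Analysis.Analysis"
begin

definition covering_map :: "'a topology \<Rightarrow> 'b topology \<Rightarrow> ('a \<Rightarrow> 'b) \<Rightarrow> bool" where
  "covering_map X Y p \<longleftrightarrow>
     continuous_map X Y p \<and> p ` topspace X = topspace Y \<and>
     (\<forall>y \<in> topspace Y. \<exists>V. openin Y V \<and> y \<in> V \<and>
        (\<exists>\<U>. \<Union>\<U> = {x \<in> topspace X. p x \<in> V} \<and> pairwise disjnt \<U> \<and>
              (\<forall>W \<in> \<U>. openin X W \<and> homeomorphic_map (subtopology X W) (subtopology Y V) p)))"

definition slice :: "'a topology \<Rightarrow> 'b topology \<Rightarrow> ('a \<Rightarrow> 'b) \<Rightarrow> 'a set \<Rightarrow> bool" where
  "slice X Y p U \<longleftrightarrow> openin X U \<and>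
     (\<exists>\<U>. U \<in> \<U> \<and> \<Union>\<U> = {x \<in> topspace X. p x \<in> p ` U} \<and> pairwise disjnt \<U> \<and>
           (\<forall>W \<in> \<U>. openin X W \<and> homeomorphic_map (subtopology X W) (subtopology Y (p ` U)) p))"

definition open_cover :: "'a topology \<Rightarrow> 'a set set \<Rightarrow> bool" where
  "open_cover X \<C> \<longleftrightarrow> (\<forall>U \<in> \<C>. openin X U) \<and> \<Union>\<C> = topspace X"

definition covering_structure :: "'a topology \<Rightarrow> 'b topology \<Rightarrow> ('a \<Rightarrow> 'b) \<Rightarrow> 'a set set \<Rightarrow> bool" where
  "covering_structure X Y p \<S> \<longleftrightarrow> open_cover X \<S> \<and> (\<forall>U \<in> \<S>. slice X Y p U) \<and>
     (\<forall>U \<in> \<S>. \<exists>\<U> \<subseteq> \<S>. \<Union>\<U> = {x \<in> topspace X. p x \<in> p ` U} \<and> pairwise disjnt \<U> \<and>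
        (\<forall>W \<in> \<U>. homeomorphic_map (subtopology X W) (subtopology Y (p ` U)) p))"

definition refinement :: "'a topology \<Rightarrow> 'a set set \<Rightarrow> 'a set set \<Rightarrow> bool" where
  "refinement X \<W> \<V> \<longleftrightarrow> open_cover X \<W> \<and> (\<forall>W \<in> \<W>. \<exists>V \<in> \<V>. W \<subseteq> V)"

end

theory Submission
  imports Defs
begin

definition good :: "'a topology \<Rightarrow> 'b topology \<Rightarrow> ('a \<Rightarrow> 'b) \<Rightarrow> 'a set set \<Rightarrow> 'b set \<Rightarrow> 'a set set \<Rightarrow> bool" where
  "good X Y p \<V> N \<U> \<longleftrightarrow> openin Y N \<and> \<Union>\<U> = {x \<in> topspace X. p x \<in> N} \<and> pairwise disjnt \<U> \<and>
     (\<forall>W\<in>\<U>. openin X W \<and> homeomorphic_map (subtopology X W) (subtopology Y N) p \<and> (\<exists>V\<in>\<V>. W \<subseteq> V))"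

lemma good_image:
  assumes "good X Y p \<V> N \<U>" "U \<in> \<U>"
  shows "p ` U = N"
proof -
  have h: "homeomorphic_map (subtopology X U) (subtopology Y N) p" and oU: "openin X U" and oN: "openin Y N"
    using assms unfolding good_def by auto
  have "p ` (topspace X \<inter> U) = topspace Y \<inter> N"
    using homeomorphic_imp_surjective_map[OF h] by simp
  moreover have "topspace X \<inter> U = U" using openin_subset[OF oU] by auto
  moreover have "topspace Y \<inter> N = N" using openin_subset[OF oN] by auto
  ultimately show ?thesis by simp
qed

lemma key:
  assumes cov: "covering_map X Y p"
    and fin: "\<And>y. y \<in> topspace Y \<Longrightarrow> finite {x \<in> topspace X. p x = y}"
    and oc: "open_cover X \<V>"
    and x: "x \<in> topspace X"
  shows "\<exists>N \<U>. good X Y p \<V> N \<U> \<and> x \<in> \<Union>\<U>"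
proof -
  define y where "y = p x"
  have cm: "continuous_map X Y p" using cov unfolding covering_map_def by auto
  have y: "y \<in> topspace Y" using cov x unfolding covering_map_def y_def by auto
  obtain V \<U> where oV: "openin Y V" and yV: "y \<in> V" and UU: "\<Union>\<U> = {x \<in> topspace X. p x \<in> V}"
    and pd: "pairwise disjnt \<U>"
    and sh: "\<And>W. W \<in> \<U> \<Longrightarrow> openin X W \<and> homeomorphic_map (subtopology X W) (subtopology Y V) p"
    using cov y unfolding covering_map_def by metis
  have Vsub: "V \<subseteq> topspace Y" using openin_subset[OF oV] .
  have Wsub: "W \<subseteq> topspace X" if "W \<in> \<U>" for W using sh[OF that] openin_subset by blast
  have pW: "p ` W = V" if "W \<in> \<U>" for W
  proof -
    have "p ` (topspace X \<inter> W) = topspace Y \<inter> V"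
      using homeomorphic_imp_surjective_map[OF conjunct2[OF sh[OF that]]] by simp
    thus ?thesis using Wsub[OF that] Vsub by (simp add: Int_absorb1 Int_absorb2)
  qed
  have injW: "inj_on p W" if "W \<in> \<U>" for W
    using homeomorphic_imp_injective_map[OF conjunct2[OF sh[OF that]]] Wsub[OF that]
    by (simp add: Int_absorb1)
  define F where "F = {z \<in> topspace X. p z = y}"
  have finF: "finite F" using fin[OF y] unfolding F_def .
  have xF: "x \<in> F" using x unfolding F_def y_def by auto
  have "\<forall>z\<in>F. \<exists>W. W \<in> \<U> \<and> z \<in> W" using UU yV unfolding F_def by auto
  then obtain Wf where Wf: "\<And>z. z \<in> F \<Longrightarrow> Wf z \<in> \<U> \<and> z \<in> Wf z" by metis
  have "\<forall>z\<in>F. \<exists>V'. V' \<in> \<V> \<and> z \<in> V'" using oc unfolding open_cover_def F_def by auto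
  then obtain Vf where Vf: "\<And>z. z \<in> F \<Longrightarrow> Vf z \<in> \<V> \<and> z \<in> Vf z" by metis
  have oVf: "openin X (Vf z)" if "z \<in> F" for z using oc Vf[OF that] unfolding open_cover_def by auto
  define N where "N = V \<inter> (\<Inter>z\<in>F. p ` (Wf z \<inter> Vf z))"
  have opimg: "openin Y (p ` (Wf z \<inter> Vf z))" if "z \<in> F" for z
  proof -
    have W: "Wf z \<in> \<U>" using Wf[OF that] by auto
    have om: "open_map (subtopology X (Wf z)) (subtopology Y V) p"
      using homeomorphic_imp_open_map sh[OF W] by blast
    have "openin (subtopology X (Wf z)) (Wf z \<inter> Vf z)"
      unfolding openin_subtopology using oVf[OF that] by blast
    hence "openin (subtopology Y V) (p ` (Wf z \<inter> Vf z))" using om unfolding open_map_def by blast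
    thus ?thesis using oV openin_trans_full by blast
  qed
  have oN: "openin Y N"
    unfolding N_def using finF xF opimg oV by (intro openin_Int openin_Inter) auto
  have NV: "N \<subseteq> V" unfolding N_def by auto
  have yN: "y \<in> N" unfolding N_def using yV Wf Vf F_def by auto
  define A where "A = {u \<in> topspace X. p u \<in> N}"
  define \<U>' where "\<U>' = (\<lambda>W. W \<inter> A) ` \<U>"
  have "good X Y p \<V> N \<U>'"
    unfolding good_def
  proof (intro conjI ballI)
    show "openin Y N" by (rule oN)
    show "\<Union>\<U>' = {x \<in> topspace X. p x \<in> N}"
      using UU NV unfolding \<U>'_def A_def by auto
    show "pairwise disjnt \<U>'"
      using pd unfolding \<U>'_def pairwise_def disjnt_def by blast
  next
    fix W' assume "W' \<in> \<U>'"
    then obtain W where W: "W \<in> \<U>" and W'eq: "W' = W \<inter> A" unfolding \<U>'_def by auto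
    show "openin X W'" unfolding W'eq A_def
      using sh[OF W] openin_continuous_map_preimage[OF cm oN] by blast
    have "p ` (topspace (subtopology X W) \<inter> A) = topspace (subtopology Y V) \<inter> N"
    proof
      show "p ` (topspace (subtopology X W) \<inter> A) \<subseteq> topspace (subtopology Y V) \<inter> N"
        unfolding A_def using NV Vsub by auto
      show "topspace (subtopology Y V) \<inter> N \<subseteq> p ` (topspace (subtopology X W) \<inter> A)"
      proof
        fix n assume "n \<in> topspace (subtopology Y V) \<inter> N"
        hence n: "n \<in> N" by auto
        then obtain w where "w \<in> W" "p w = n" using pW[OF W] NV by blast
        thus "n \<in> p ` (topspace (subtopology X W) \<inter> A)"
          using Wsub[OF W] n unfolding A_def by auto
      qed
    qed
    from homeomorphic_map_subtopologies[OF conjunct2[OF sh[OF W]] this]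
    show "homeomorphic_map (subtopology X W') (subtopology Y N) p"
      unfolding subtopology_subtopology W'eq using NV by (simp add: Int_absorb1)
    obtain z where z: "z \<in> W" "p z = y" using pW[OF W] yV by (metis imageE)
    have zF: "z \<in> F" using z Wsub[OF W] unfolding F_def by auto
    have WW: "Wf z = W"
      using pd Wf[OF zF] W z unfolding pairwise_def disjnt_def by blast
    have "W' \<subseteq> Vf z"
    proof
      fix w assume "w \<in> W'"
      hence w: "w \<in> W" "p w \<in> N" unfolding W'eq A_def by auto
      hence "p w \<in> p ` (W \<inter> Vf z)" unfolding N_def using zF WW by auto
      then obtain w' where "w' \<in> W \<inter> Vf z" "p w' = p w" by auto
      thus "w \<in> Vf z" using injW[OF W] w inj_onD by fastforce
    qed
    thus "\<exists>V\<in>\<V>. W' \<subseteq> V" using Vf[OF zF] by blast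
  qed
  moreover have "x \<in> \<Union>\<U>'"
    using Wf[OF xF] yN x unfolding \<U>'_def A_def y_def by blast
  ultimately show ?thesis by blast
qed

theorem lemma4p10:
  fixes X :: "'a topology" and Y :: "'b topology" and p :: "'a \<Rightarrow> 'b"
  assumes "covering_map X Y p"
    and "\<And>y. y \<in> topspace Y \<Longrightarrow> finite {x \<in> topspace X. p x = y}"
    and "Hausdorff_space X"
    and "open_cover X \<V>"
  shows "\<exists>\<S>. refinement X \<S> \<V> \<and> covering_structure X Y p \<S>"
proof -
  define S where "S = \<Union>{\<U>. \<exists>N. good X Y p \<V> N \<U>}"
  have inS: "\<exists>N \<U>. good X Y p \<V> N \<U> \<and> U \<in> \<U>" if "U \<in> S" for U
    using that unfolding S_def by blast
  have goodW: "openin X W \<and> (\<exists>V\<in>\<V>. W \<subseteq> V)" if WS: "W \<in> S" for W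
  proof -
    obtain N \<U> where g: "good X Y p \<V> N \<U>" and W: "W \<in> \<U>" using inS[OF WS] by blast
    show ?thesis using g W unfolding good_def by simp
  qed
  have oc: "open_cover X S"
    unfolding open_cover_def
  proof (intro conjI ballI)
    fix U assume "U \<in> S" then show "openin X U" using goodW by simp
  next
    show "\<Union>S = topspace X"
    proof
      show "\<Union>S \<subseteq> topspace X" using goodW openin_subset by (meson Sup_least)
      show "topspace X \<subseteq> \<Union>S"
      proof
        fix x assume "x \<in> topspace X"
        from key[OF assms(1,2,4) this] obtain N \<U> where "good X Y p \<V> N \<U>" "x \<in> \<Union>\<U>" by blast
        then show "x \<in> \<Union>S" unfolding S_def by blast
      qed
    qed
  qed
  have "refinement X S \<V>"
    unfolding refinement_def using oc goodW by simp
  moreover have "covering_structure X Y p S"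
    unfolding covering_structure_def
  proof (intro conjI ballI)
    show "open_cover X S" by (rule oc)
  next
    fix U assume "U \<in> S"
    then obtain N \<U> where g: "good X Y p \<V> N \<U>" and U: "U \<in> \<U>" using inS by blast
    have pU: "p ` U = N" using good_image[OF g U] .
    have sub: "\<U> \<subseteq> S" using g unfolding S_def by blast
    have g1: "\<Union>\<U> = {x \<in> topspace X. p x \<in> N}" and g2: "pairwise disjnt \<U>"
      and g3: "\<forall>W\<in>\<U>. openin X W \<and> homeomorphic_map (subtopology X W) (subtopology Y N) p"
      using g unfolding good_def by auto
    have oU: "openin X U" using g3 U by simp
    show "slice X Y p U"
      unfolding slice_def pU
    proof (intro conjI exI[of _ \<U>])
      show "openin X U" by (rule oU)
      show "U \<in> \<U>" by (rule U)
      show "\<Union>\<U> = {x \<in> topspace X. p x \<in> N}" by (rule g1)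
      show "pairwise disjnt \<U>" by (rule g2)
      show "\<forall>W\<in>\<U>. openin X W \<and> homeomorphic_map (subtopology X W) (subtopology Y N) p" by (rule g3)
    qed
    show "\<exists>\<U>\<subseteq>S. \<Union>\<U> = {x \<in> topspace X. p x \<in> p ` U} \<and> pairwise disjnt \<U> \<and>
        (\<forall>W\<in>\<U>. homeomorphic_map (subtopology X W) (subtopology Y (p ` U)) p)"
      unfolding pU
    proof (intro exI[of _ \<U>] conjI)
      show "\<U> \<subseteq> S" by (rule sub)
      show "\<Union>\<U> = {x \<in> topspace X. p x \<in> N}" by (rule g1)
      show "pairwise disjnt \<U>" by (rule g2)
      show "\<forall>W\<in>\<U>. homeomorphic_map (subtopology X W) (subtopology Y N) p" using g3 by simp
    qed
  qed
  ultimately show ?thesis by blast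
qed

end
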